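(* In a combinatorial auction with single-dimensional signals and SOS valuations, fix a true signal profile $\mathbf{s}$ (reported truthfully) and a welfare-maximizing allocation $T^*=(T_i^* )_i$ at $\mathbf{s}$. Then the expected welfare $\mathbb{E}[\sum_i v_{i\tilde T_i}(\mathbf{s})]$ of the Random Sampling mechanism is at least $\frac14\mathsf{OTHER}$, where $\mathsf{OTHER}=\sum_i v_{iT_i^*}(\mathbf{s}_{-i},0_i)$.
   Context: Setting: $n$ agents, $m$ items; agent $i$ has private signal $s_i\ge0$; her value for bundle $T$ is $v_{iT}(\mathbf{s})\ge0$, public, weakly increasing in each coordinate, strictly in $s_i$; each $v_{iT}$ is SOS: for every coordinate $j$, $s_j$, $\delta\ge0$, and $\mathbf{s}'_{-j}\le\mathbf{s}_{-j}$ coordinate-wise, $v(\mathbf{s}'_{-j},s_j+\delta)-v(\mathbf{s}'_{-j},s_j)\ge v(\mathbf{s}_{-j},s_j+\delta)-v(\mathbf{s}_{-j},s_j)$. $(\mathbf{s}_{-i},0_i)$ is $\mathbf{s}$ with $s_i$ set to $0$. Random Sampling (on reports $\mathbf{s}$): split agents uniformly at random into $A,B$; for $i\in B$ let $\tilde v_{iT}=v_{iT}(\mathbf{s}_A,\mathbf{0}_B)$ (all signals of $B$, including $i$'s own, set to $0$), for $i\in A$ let $\tilde v_{iT}=0$; choose $\tilde T\in\arg\max\sum_{i\in B}\tilde v_{i\tilde T_i}$ over allocations to agents of $B$; no payments. *)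

theory Defs
  imports Complex_Main
begin

text \<open>Agents are the elements of a finite type 'n, items the elements of a finite type 'm.
  A signal profile is a function 'n \<Rightarrow> real; only nonnegative profiles are meaningful.
  A valuation is v :: 'n \<Rightarrow> 'm set \<Rightarrow> ('n \<Rightarrow> real) \<Rightarrow> real, v i T s = v_{iT}(s).\<close>

definition nonneg_profile :: "('n \<Rightarrow> real) \<Rightarrow> bool" where
  "nonneg_profile s \<longleftrightarrow> (\<forall>j. 0 \<le> s j)"

definition is_allocation :: "('n \<Rightarrow> 'm set) \<Rightarrow> bool" where
  "is_allocation T \<longleftrightarrow> (\<forall>i j. i \<noteq> j \<longrightarrow> T i \<inter> T j = {})"

definition weakly_increasing :: "(('n \<Rightarrow> real) \<Rightarrow> real) \<Rightarrow> bool" where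
  "weakly_increasing f \<longleftrightarrow>
     (\<forall>s s'. nonneg_profile s \<and> (\<forall>j. s j \<le> s' j) \<longrightarrow> f s \<le> f s')"

definition strictly_increasing_in :: "'n \<Rightarrow> (('n \<Rightarrow> real) \<Rightarrow> real) \<Rightarrow> bool" where
  "strictly_increasing_in i f \<longleftrightarrow>
     (\<forall>s \<delta>. nonneg_profile s \<and> 0 < \<delta> \<longrightarrow> f s < f (s(i := s i + \<delta>)))"

definition SOS :: "(('n \<Rightarrow> real) \<Rightarrow> real) \<Rightarrow> bool" where
  "SOS f \<longleftrightarrow>
     (\<forall>j s s' \<delta>. nonneg_profile s \<and> nonneg_profile s' \<and> 0 \<le> \<delta> \<and>
        s' j = s j \<and> (\<forall>k. k \<noteq> j \<longrightarrow> s' k \<le> s k) \<longrightarrow>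
        f (s(j := s j + \<delta>)) - f s \<le> f (s'(j := s j + \<delta>)) - f s')"

definition valid_valuations :: "('n \<Rightarrow> 'm set \<Rightarrow> ('n \<Rightarrow> real) \<Rightarrow> real) \<Rightarrow> bool" where
  "valid_valuations v \<longleftrightarrow>
     (\<forall>i T. (\<forall>s. nonneg_profile s \<longrightarrow> 0 \<le> v i T s)
          \<and> weakly_increasing (v i T)
          \<and> strictly_increasing_in i (v i T)
          \<and> SOS (v i T))"

definition welfare :: "('n::finite \<Rightarrow> 'm set \<Rightarrow> ('n \<Rightarrow> real) \<Rightarrow> real) \<Rightarrow> ('n \<Rightarrow> 'm set)
    \<Rightarrow> ('n \<Rightarrow> real) \<Rightarrow> real" where
  "welfare v T s = (\<Sum>i\<in>UNIV. v i (T i) s)"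

definition welfare_maximizing ::
  "('n::finite \<Rightarrow> 'm set \<Rightarrow> ('n \<Rightarrow> real) \<Rightarrow> real) \<Rightarrow> ('n \<Rightarrow> real) \<Rightarrow> ('n \<Rightarrow> 'm set) \<Rightarrow> bool" where
  "welfare_maximizing v s T \<longleftrightarrow> is_allocation T \<and>
     (\<forall>T'. is_allocation T' \<longrightarrow> welfare v T' s \<le> welfare v T s)"

definition OTHER :: "('n::finite \<Rightarrow> 'm set \<Rightarrow> ('n \<Rightarrow> real) \<Rightarrow> real) \<Rightarrow> ('n \<Rightarrow> real)
    \<Rightarrow> ('n \<Rightarrow> 'm set) \<Rightarrow> real" where
  "OTHER v s T = (\<Sum>i\<in>UNIV. v i (T i) (s(i := 0)))"

definition zero_on :: "'n set \<Rightarrow> ('n \<Rightarrow> real) \<Rightarrow> ('n \<Rightarrow> real)" where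
  "zero_on B s = (\<lambda>j. if j \<in> B then 0 else s j)"

definition allocation_to :: "'n set \<Rightarrow> ('n \<Rightarrow> 'm set) \<Rightarrow> bool" where
  "allocation_to B T \<longleftrightarrow> is_allocation T \<and> (\<forall>i. i \<notin> B \<longrightarrow> T i = {})"

definition RS_estimate :: "('n::finite \<Rightarrow> 'm set \<Rightarrow> ('n \<Rightarrow> real) \<Rightarrow> real) \<Rightarrow> ('n \<Rightarrow> real)
    \<Rightarrow> 'n set \<Rightarrow> ('n \<Rightarrow> 'm set) \<Rightarrow> real" where
  "RS_estimate v s B T = (\<Sum>i\<in>B. v i (T i) (zero_on B s))"

text \<open>A (arbitrary tie-breaking) outcome rule of Random Sampling: for each realisation B of
  the random set B (A = complement), TT B is an argmax of the estimated welfare over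
  allocations to agents of B.\<close>
definition RS_outcome :: "('n::finite \<Rightarrow> 'm set \<Rightarrow> ('n \<Rightarrow> real) \<Rightarrow> real) \<Rightarrow> ('n \<Rightarrow> real)
    \<Rightarrow> ('n set \<Rightarrow> 'n \<Rightarrow> 'm set) \<Rightarrow> bool" where
  "RS_outcome v s TT \<longleftrightarrow> (\<forall>B. allocation_to B (TT B) \<and>
     (\<forall>T. allocation_to B T \<longrightarrow> RS_estimate v s B T \<le> RS_estimate v s B (TT B)))"

definition RS_expected_welfare :: "('n::finite \<Rightarrow> 'm set \<Rightarrow> ('n \<Rightarrow> real) \<Rightarrow> real) \<Rightarrow> ('n \<Rightarrow> real)
    \<Rightarrow> ('n set \<Rightarrow> 'n \<Rightarrow> 'm set) \<Rightarrow> real" where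
  "RS_expected_welfare v s TT =
     (\<Sum>B\<in>(UNIV :: 'n set set). welfare v (TT B) s) / 2 ^ card (UNIV :: 'n set)"

end

theory Submission
  imports Defs
begin

lemma zero_on_nonneg: "nonneg_profile s \<Longrightarrow> nonneg_profile (zero_on B s)"
  by (simp add: nonneg_profile_def zero_on_def)

lemma sos_sub:
  assumes sos: "SOS f" and s: "nonneg_profile s" and fin: "finite Q"
  shows "P \<inter> Q = {} \<Longrightarrow> f (zero_on (-(P\<union>Q)) s) + f (zero_on UNIV s)
            \<le> f (zero_on (-P) s) + f (zero_on (-Q) s)"
  using fin
proof (induction Q rule: finite_induct)
  case empty
  then show ?case by simp
next
  case (insert j Q)
  have IH: "f (zero_on (-(P\<union>Q)) s) + f (zero_on UNIV s)
            \<le> f (zero_on (-P) s) + f (zero_on (-Q) s)" using insert by auto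
  have jP: "j \<notin> P" using insert by auto
  define sb where "sb = zero_on (-(P\<union>Q)) s"
  define ss where "ss = zero_on (-Q) s"
  have "f (sb(j := sb j + s j)) - f sb \<le> f (ss(j := sb j + s j)) - f ss"
  proof -
    have H: "\<And>j s s' \<delta>. nonneg_profile s \<and> nonneg_profile s' \<and> 0 \<le> \<delta> \<and>
        s' j = s j \<and> (\<forall>k. k \<noteq> j \<longrightarrow> s' k \<le> s k) \<Longrightarrow>
        f (s(j := s j + \<delta>)) - f s \<le> f (s'(j := s j + \<delta>)) - f s'"
      using sos unfolding SOS_def by blast
    have e: "ss j = sb j" using jP insert(2) by (auto simp: sb_def ss_def zero_on_def)
    show ?thesis using H[of sb ss "s j" j] e
      using s jP insert(2) by (auto simp: sb_def ss_def zero_on_def nonneg_profile_def)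
  qed
  moreover have "sb(j := sb j + s j) = zero_on (-(P\<union>insert j Q)) s"
    using jP insert(2) by (auto simp: sb_def zero_on_def)
  moreover have "ss(j := sb j + s j) = zero_on (-(insert j Q)) s"
    using jP insert(2) by (auto simp: sb_def ss_def zero_on_def)
  ultimately show ?case using IH by (simp add: sb_def ss_def)
qed

lemma pair_bound:
  fixes v :: "'n::finite \<Rightarrow> 'm set \<Rightarrow> ('n \<Rightarrow> real) \<Rightarrow> real"
  assumes vv: "valid_valuations v" and s: "nonneg_profile s" and iB: "i \<in> B"
  shows "v i T (zero_on B s) + v i T (zero_on ((-B) \<union> {i}) s) \<ge> v i T (s(i := 0))"
proof -
  let ?f = "v i T"
  have sos: "SOS ?f" using vv by (simp add: valid_valuations_def)
  define P where "P = - B"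
  define Q where "Q = B - {i}"
  have "P \<inter> Q = {}" by (auto simp: P_def Q_def)
  from sos_sub[OF sos s finite this]
  have "?f (zero_on (-(P\<union>Q)) s) + ?f (zero_on UNIV s)
            \<le> ?f (zero_on (-P) s) + ?f (zero_on (-Q) s)" .
  moreover have "zero_on (-(P\<union>Q)) s = s(i := 0)" using iB
    by (auto simp: zero_on_def P_def Q_def)
  moreover have "-P = B" by (simp add: P_def)
  moreover have "-Q = (-B) \<union> {i}" by (auto simp: Q_def)
  moreover have "?f (zero_on UNIV s) \<ge> 0"
    using vv zero_on_nonneg[OF s] by (simp add: valid_valuations_def)
  ultimately show ?thesis by simp
qed

lemma count_half:
  fixes i :: "'n::finite"
  shows "(\<Sum>B\<in>(UNIV::'n set set). if i \<in> B then (c::real) else 0) * 2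
         = 2 ^ card (UNIV :: 'n set) * c"
proof -
  have r: "(\<Sum>B\<in>(UNIV::'n set set). if i \<in> B then c else 0)
        = (\<Sum>B\<in>(UNIV::'n set set). if i \<in> -B then c else 0)"
    by (rule sum.reindex_bij_witness[of _ uminus uminus]) auto
  have "(\<Sum>B\<in>(UNIV::'n set set). if i \<in> B then c else 0)
        + (\<Sum>B\<in>(UNIV::'n set set). if i \<in> -B then c else 0)
        = (\<Sum>B\<in>(UNIV::'n set set). c)"
    by (subst sum.distrib[symmetric]) (rule sum.cong, auto)
  also have "\<dots> = 2 ^ card (UNIV :: 'n set) * c"
    using card_Pow[of "UNIV :: 'n set"] by simp
  finally show ?thesis using r by simp
qed

lemma agent_bound:
  fixes v :: "'n::finite \<Rightarrow> 'm set \<Rightarrow> ('n \<Rightarrow> real) \<Rightarrow> real"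
  assumes vv: "valid_valuations v" and s: "nonneg_profile s"
  shows "(\<Sum>B\<in>(UNIV::'n set set). if i \<in> B then v i T (zero_on B s) else 0) * 4
         \<ge> 2 ^ card (UNIV :: 'n set) * v i T (s(i := 0))"
proof -
  define h where "h B = v i T (zero_on B s)" for B
  define c where "c = v i T (s(i := 0))"
  define \<psi> where "\<psi> B = (-B - {i}) \<union> (B \<inter> {i})" for B :: "'n set"
  have inv: "\<psi> (\<psi> B) = B" for B by (auto simp: \<psi>_def)
  have mem: "(i \<in> \<psi> B) = (i \<in> B)" for B by (auto simp: \<psi>_def)
  have r: "(\<Sum>B\<in>(UNIV::'n set set). if i \<in> B then h B else 0)
        = (\<Sum>B\<in>(UNIV::'n set set). if i \<in> B then h (\<psi> B) else 0)"
    by (rule sum.reindex_bij_witness[of _ \<psi> \<psi>]) (auto simp: inv mem)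
  have "(\<Sum>B\<in>(UNIV::'n set set). if i \<in> B then c else 0)
        \<le> (\<Sum>B\<in>(UNIV::'n set set). if i \<in> B then h B + h (\<psi> B) else 0)"
  proof (rule sum_mono)
    fix B :: "'n set"
    show "(if i \<in> B then c else 0) \<le> (if i \<in> B then h B + h (\<psi> B) else 0)"
    proof (cases "i \<in> B")
      case True
      have "\<psi> B = (-B) \<union> {i}" using True by (auto simp: \<psi>_def)
      then show ?thesis using True pair_bound[OF vv s True, of T] by (simp add: h_def c_def)
    qed simp
  qed
  also have "\<dots> = (\<Sum>B\<in>(UNIV::'n set set). if i \<in> B then h B else 0) * 2"
  proof -
    have "(\<Sum>B\<in>(UNIV::'n set set). if i \<in> B then h B + h (\<psi> B) else 0)
       = (\<Sum>B\<in>(UNIV::'n set set). if i \<in> B then h B else 0)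
         + (\<Sum>B\<in>(UNIV::'n set set). if i \<in> B then h (\<psi> B) else 0)"
      by (subst sum.distrib[symmetric]) (rule sum.cong, auto)
    then show ?thesis using r by simp
  qed
  finally have "(\<Sum>B\<in>(UNIV::'n set set). if i \<in> B then c else 0) * 2
      \<le> (\<Sum>B\<in>(UNIV::'n set set). if i \<in> B then h B else 0) * 4" by simp
  then show ?thesis unfolding count_half h_def c_def .
qed

lemma per_split:
  fixes v :: "'n::finite \<Rightarrow> 'm set \<Rightarrow> ('n \<Rightarrow> real) \<Rightarrow> real"
  assumes vv: "valid_valuations v" and s: "nonneg_profile s"
    and ws: "welfare_maximizing v s Tstar" and rs: "RS_outcome v s TT"
  shows "welfare v (TT B) s \<ge> (\<Sum>i\<in>UNIV. if i \<in> B then v i (Tstar i) (zero_on B s) else 0)"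
proof -
  define TB where "TB i = (if i \<in> B then Tstar i else {})" for i
  have "is_allocation Tstar" using ws by (simp add: welfare_maximizing_def)
  then have "allocation_to B TB" by (auto simp: allocation_to_def is_allocation_def TB_def)
  then have "RS_estimate v s B TB \<le> RS_estimate v s B (TT B)"
    using rs by (simp add: RS_outcome_def)
  moreover have "RS_estimate v s B TB
      = (\<Sum>i\<in>UNIV. if i \<in> B then v i (Tstar i) (zero_on B s) else 0)"
    by (simp add: RS_estimate_def sum.If_cases TB_def)
  moreover have "RS_estimate v s B (TT B)
      = (\<Sum>i\<in>UNIV. if i \<in> B then v i (TT B i) (zero_on B s) else 0)"
    by (simp add: RS_estimate_def sum.If_cases)
  moreover have "(\<Sum>i\<in>UNIV. if i \<in> B then v i (TT B i) (zero_on B s) else 0)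
      \<le> welfare v (TT B) s"
    unfolding welfare_def
  proof (rule sum_mono)
    fix i
    have le: "v i (TT B i) (zero_on B s) \<le> v i (TT B i) s"
      using vv zero_on_nonneg[OF s, of B] s
      by (auto simp: valid_valuations_def weakly_increasing_def zero_on_def nonneg_profile_def)
    have "0 \<le> v i (TT B i) s" using vv s by (simp add: valid_valuations_def)
    then show "(if i \<in> B then v i (TT B i) (zero_on B s) else 0) \<le> v i (TT B i) s"
      using le by simp
  qed
  ultimately show ?thesis by linarith
qed

theorem mainTheorem7:
  fixes v :: "'n::finite \<Rightarrow> 'm::finite set \<Rightarrow> ('n \<Rightarrow> real) \<Rightarrow> real"
    and s :: "'n \<Rightarrow> real"
    and Tstar :: "'n \<Rightarrow> 'm set"
    and TT :: "'n set \<Rightarrow> 'n \<Rightarrow> 'm set"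
  assumes "valid_valuations v"
    and "nonneg_profile s"
    and "welfare_maximizing v s Tstar"
    and "RS_outcome v s TT"
  shows "RS_expected_welfare v s TT \<ge> OTHER v s Tstar / 4"
proof -
  let ?N = "2 ^ card (UNIV :: 'n set) :: real"
  have "(\<Sum>B\<in>(UNIV::'n set set). welfare v (TT B) s)
     \<ge> (\<Sum>B\<in>(UNIV::'n set set). \<Sum>i\<in>UNIV. if i \<in> B then v i (Tstar i) (zero_on B s) else 0)"
    by (rule sum_mono) (rule per_split[OF assms])
  also have "(\<Sum>B\<in>(UNIV::'n set set). \<Sum>i\<in>UNIV. if i \<in> B then v i (Tstar i) (zero_on B s) else 0)
     = (\<Sum>i\<in>UNIV. \<Sum>B\<in>(UNIV::'n set set). if i \<in> B then v i (Tstar i) (zero_on B s) else 0)"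
    by (rule sum.swap)
  finally have A: "(\<Sum>i\<in>UNIV. \<Sum>B\<in>(UNIV::'n set set). if i \<in> B then v i (Tstar i) (zero_on B s) else 0)
      \<le> (\<Sum>B\<in>(UNIV::'n set set). welfare v (TT B) s)" .
  have "?N * OTHER v s Tstar = (\<Sum>i\<in>UNIV. ?N * v i (Tstar i) (s(i := 0)))"
    by (simp add: OTHER_def sum_distrib_left)
  also have "\<dots> \<le> (\<Sum>i\<in>UNIV. (\<Sum>B\<in>(UNIV::'n set set). if i \<in> B then v i (Tstar i) (zero_on B s) else 0) * 4)"
    by (rule sum_mono) (rule agent_bound[OF assms(1,2)])
  also have "\<dots> = 4 * (\<Sum>i\<in>UNIV. \<Sum>B\<in>(UNIV::'n set set). if i \<in> B then v i (Tstar i) (zero_on B s) else 0)"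
    by (simp add: sum_distrib_left mult.commute)
  finally have "?N * OTHER v s Tstar \<le> 4 * (\<Sum>B\<in>(UNIV::'n set set). welfare v (TT B) s)"
    using A by linarith
  moreover have "?N > 0" by simp
  ultimately show ?thesis unfolding RS_expected_welfare_def
    by (simp add: field_simps)
qed

end
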